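(* Let $(A,A^* )$ be a left-symmetric bialgebroid. Then for all $x\in\Gamma(A)$, $\xi\in\Gamma(A^* )$ and $f\in C^\infty(M)$, $$x\cdot_A d_*f=-R_{df}x,\qquad \xi\cdot_{A^*}df=-R_{d_*f}\xi,$$ where $R_\eta:A\to A$ and $R_y:A^*\to A^*$ are defined by $\langle R_\eta x,\zeta\rangle=-\langle x,\zeta\cdot_{A^*}\eta\rangle$ and $\langle R_y\xi,z\rangle=-\langle\xi,z\cdot_Ay\rangle$.
   Context: A left-symmetric algebroid is a vector bundle $A\to M$ with an $\mathbb R$-bilinear multiplication $\cdot_A$ on $\Gamma(A)$ with $x\cdot_A(y\cdot_Az)-(x\cdot_Ay)\cdot_Az$ symmetric in $x,y$, and an anchor $a_A:A\to TM$ with $x\cdot_A(fy)=f(x\cdot_Ay)+a_A(x)(f)y$, $(fx)\cdot_Ay=f(x\cdot_Ay)$; $[x,y]_A=x\cdot_Ay-y\cdot_Ax$; $d$ is the differential of the Lie algebroid $(A,[\cdot,\cdot]_A,a_A)$. The coboundary $\delta:C^n(A)\to C^{n+1}(A)$, $C^{n+1}(A)=\Gamma(\wedge^nA^*\otimes A^* )$, is $\delta\varphi(x_1,\dots,x_{n+1})=\sum_{i=1}^n(-1)^{i+1}a_A(x_i)\varphi(\dots,\hat{x_i},\dots,x_{n+1})-\sum_{i=1}^n(-1)^{i+1}\varphi(\dots,\hat{x_i},\dots,x_n,x_i\cdot_Ax_{n+1})+\sum_{i<j\le n}(-1)^{i+j}\varphi([x_i,x_j]_A,\dots,\hat{x_i},\dots,\hat{x_j},\dots,x_{n+1})$.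 The Lie derivative $\mathfrak L_x$ on $\Gamma(A\otimes A)$ is $\mathfrak L_x(y_1\otimes y_2)=(x\cdot_Ay_1)\otimes y_2+y_1\otimes[x,y_2]_A$. For left-symmetric algebroids $A$ and $A^*$ on dual bundles, $[\cdot,\cdot]_{A^*}$, $d_*$ ($\langle d_*f,\xi\rangle=a_{A^*}(\xi)f$), $\delta_*$, $\mathfrak L_\xi$ are defined by the same formulas with $A$ and $A^*$ exchanged. $(A,A^* )$ is a left-symmetric bialgebroid if $\delta[\xi,\eta]_{A^*}=\mathfrak L_\xi\delta\eta-\mathfrak L_\eta\delta\xi$ and $\delta_*[x,y]_A=\mathfrak L_x\delta_*y-\mathfrak L_y\delta_*x$ for all $x,y\in\Gamma(A)$, $\xi,\eta\in\Gamma(A^* )$. *)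

theory Defs
  imports Main "HOL.Real_Vector_Spaces"
begin

text \<open>Algebraic (Serre--Swan) model.  The type 'f plays the role of C-infinity(M),
 'a of Gamma(A) and 'b of Gamma(A*).  Vector fields on M are the derivations of C-infinity(M).\<close>

definition is_fmodule :: "('f::comm_ring_1 \<Rightarrow> 'a::ab_group_add \<Rightarrow> 'a) \<Rightarrow> bool" where
  "is_fmodule sm \<longleftrightarrow>
     (\<forall>f x y. sm f (x + y) = sm f x + sm f y) \<and>
     (\<forall>f g x. sm (f + g) x = sm f x + sm g x) \<and>
     (\<forall>f g x. sm (f * g) x = sm f (sm g x)) \<and>
     (\<forall>x. sm 1 x = x)"

definition is_vector_field :: "('f::{comm_ring_1,real_algebra_1} \<Rightarrow> 'f) \<Rightarrow> bool" where
  "is_vector_field D \<longleftrightarrow>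
     (\<forall>f g. D (f + g) = D f + D g) \<and>
     (\<forall>f g. D (f * g) = f * D g + g * D f) \<and>
     (\<forall>c::real. D (of_real c) = 0)"

text \<open>Gamma(A) and Gamma(A*) are dual: a C-infinity-bilinear pairing pr x xi = <x,xi>,
 nondegenerate in the Gamma(A*) argument, and Gamma(A) is finitely generated projective
 with a dual basis (this makes Gamma(A*) the full dual module of Gamma(A) and vice versa).\<close>
definition dual_pair ::
  "('f::{comm_ring_1,real_algebra_1} \<Rightarrow> 'a::ab_group_add \<Rightarrow> 'a) \<Rightarrow> ('f \<Rightarrow> 'b::ab_group_add \<Rightarrow> 'b)
   \<Rightarrow> ('a \<Rightarrow> 'b \<Rightarrow> 'f) \<Rightarrow> bool" where
  "dual_pair sm sm' pr \<longleftrightarrow>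
     is_fmodule sm \<and> is_fmodule sm' \<and>
     (\<forall>x y \<xi>. pr (x + y) \<xi> = pr x \<xi> + pr y \<xi>) \<and>
     (\<forall>x \<xi> \<eta>. pr x (\<xi> + \<eta>) = pr x \<xi> + pr x \<eta>) \<and>
     (\<forall>f x \<xi>. pr (sm f x) \<xi> = f * pr x \<xi>) \<and>
     (\<forall>f x \<xi>. pr x (sm' f \<xi>) = f * pr x \<xi>) \<and>
     (\<forall>\<xi>. (\<forall>x. pr x \<xi> = 0) \<longrightarrow> \<xi> = 0) \<and>
     (\<exists>E::('a \<times> 'b) list. \<forall>x. x = (\<Sum>(e, \<epsilon>) \<leftarrow> E. sm (pr x \<epsilon>) e))"

definition left_symmetric_algebroid ::
  "('f::{comm_ring_1,real_algebra_1} \<Rightarrow> 'a::ab_group_add \<Rightarrow> 'a) \<Rightarrow> ('a \<Rightarrow> 'a \<Rightarrow> 'a)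
   \<Rightarrow> ('a \<Rightarrow> 'f \<Rightarrow> 'f) \<Rightarrow> bool" where
  "left_symmetric_algebroid sm m a \<longleftrightarrow>
     is_fmodule sm \<and>
     (\<forall>x. is_vector_field (a x)) \<and>
     (\<forall>x y g. a (x + y) g = a x g + a y g) \<and>
     (\<forall>f x g. a (sm f x) g = f * a x g) \<and>
     (\<forall>x y z. m (x + y) z = m x z + m y z) \<and>
     (\<forall>x y z. m x (y + z) = m x y + m x z) \<and>
     (\<forall>(c::real) x y. m (sm (of_real c) x) y = sm (of_real c) (m x y)) \<and>
     (\<forall>(c::real) x y. m x (sm (of_real c) y) = sm (of_real c) (m x y)) \<and>
     (\<forall>x y z. m x (m y z) - m (m x y) z = m y (m x z) - m (m y x) z) \<and>
     (\<forall>f x y. m x (sm f y) = sm f (m x y) + sm (a x f) y) \<and>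
     (\<forall>f x y. m (sm f x) y = sm f (m x y))"

definition commutator :: "('a::ab_group_add \<Rightarrow> 'a \<Rightarrow> 'a) \<Rightarrow> 'a \<Rightarrow> 'a \<Rightarrow> 'a" where
  "commutator m x y = m x y - m y x"

definition dA :: "('a \<Rightarrow> 'b \<Rightarrow> 'f) \<Rightarrow> ('a \<Rightarrow> 'f \<Rightarrow> 'f) \<Rightarrow> 'f \<Rightarrow> 'b" where
  "dA pr aA f = (THE \<xi>. \<forall>x. pr x \<xi> = aA x f)"

definition dstar :: "('a \<Rightarrow> 'b \<Rightarrow> 'f) \<Rightarrow> ('b \<Rightarrow> 'f \<Rightarrow> 'f) \<Rightarrow> 'f \<Rightarrow> 'a" where
  "dstar pr aB f = (THE y. \<forall>\<xi>. pr y \<xi> = aB \<xi> f)"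

text \<open>Coboundary on C^1(A) = Gamma(A*), with values in C^2(A) = Gamma(A* (x) A*) seen as
 C-infinity-bilinear forms on Gamma(A):  delta eta (x1,x2) = a_A(x1)<x2,eta> - <x1.x2, eta>.\<close>
definition deltaA :: "('a \<Rightarrow> 'b \<Rightarrow> 'f::ab_group_add) \<Rightarrow> ('a \<Rightarrow> 'a \<Rightarrow> 'a) \<Rightarrow> ('a \<Rightarrow> 'f \<Rightarrow> 'f)
    \<Rightarrow> 'b \<Rightarrow> 'a \<Rightarrow> 'a \<Rightarrow> 'f" where
  "deltaA pr mA aA \<eta> x1 x2 = aA x1 (pr x2 \<eta>) - pr (mA x1 x2) \<eta>"

definition deltaB :: "('a \<Rightarrow> 'b \<Rightarrow> 'f::ab_group_add) \<Rightarrow> ('b \<Rightarrow> 'b \<Rightarrow> 'b) \<Rightarrow> ('b \<Rightarrow> 'f \<Rightarrow> 'f)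
    \<Rightarrow> 'a \<Rightarrow> 'b \<Rightarrow> 'b \<Rightarrow> 'f" where
  "deltaB pr mB aB y \<xi>1 \<xi>2 = aB \<xi>1 (pr y \<xi>2) - pr y (mB \<xi>1 \<xi>2)"

text \<open>Elements of Gamma(A* (x) A*) written as finite sums of decomposables (lists of pairs),
 evaluated as bilinear forms on Gamma(A); likewise for Gamma(A (x) A).\<close>
definition tensB :: "('a \<Rightarrow> 'b \<Rightarrow> 'f::comm_ring_1) \<Rightarrow> ('b \<times> 'b) list \<Rightarrow> 'a \<Rightarrow> 'a \<Rightarrow> 'f" where
  "tensB pr L x1 x2 = (\<Sum>(\<eta>1, \<eta>2) \<leftarrow> L. pr x1 \<eta>1 * pr x2 \<eta>2)"

definition tensA :: "('a \<Rightarrow> 'b \<Rightarrow> 'f::comm_ring_1) \<Rightarrow> ('a \<times> 'a) list \<Rightarrow> 'b \<Rightarrow> 'b \<Rightarrow> 'f" where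
  "tensA pr L \<xi>1 \<xi>2 = (\<Sum>(y1, y2) \<leftarrow> L. pr y1 \<xi>1 * pr y2 \<xi>2)"

definition LieB :: "('b::ab_group_add \<Rightarrow> 'b \<Rightarrow> 'b) \<Rightarrow> 'b \<Rightarrow> ('b \<times> 'b) list \<Rightarrow> ('b \<times> 'b) list" where
  "LieB mB \<xi> L = concat (map (\<lambda>(\<eta>1, \<eta>2). [(mB \<xi> \<eta>1, \<eta>2), (\<eta>1, commutator mB \<xi> \<eta>2)]) L)"

definition LieA :: "('a::ab_group_add \<Rightarrow> 'a \<Rightarrow> 'a) \<Rightarrow> 'a \<Rightarrow> ('a \<times> 'a) list \<Rightarrow> ('a \<times> 'a) list" where
  "LieA mA x L = concat (map (\<lambda>(y1, y2). [(mA x y1, y2), (y1, commutator mA x y2)]) L)"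

definition left_symmetric_bialgebroid ::
  "('f::{comm_ring_1,real_algebra_1} \<Rightarrow> 'a::ab_group_add \<Rightarrow> 'a) \<Rightarrow> ('f \<Rightarrow> 'b::ab_group_add \<Rightarrow> 'b)
   \<Rightarrow> ('a \<Rightarrow> 'b \<Rightarrow> 'f) \<Rightarrow> ('a \<Rightarrow> 'a \<Rightarrow> 'a) \<Rightarrow> ('a \<Rightarrow> 'f \<Rightarrow> 'f)
   \<Rightarrow> ('b \<Rightarrow> 'b \<Rightarrow> 'b) \<Rightarrow> ('b \<Rightarrow> 'f \<Rightarrow> 'f) \<Rightarrow> bool" where
  "left_symmetric_bialgebroid sm sm' pr mA aA mB aB \<longleftrightarrow>
     dual_pair sm sm' pr \<and>
     left_symmetric_algebroid sm mA aA \<and>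
     left_symmetric_algebroid sm' mB aB \<and>
     (\<forall>\<xi> \<eta> L1 L2. tensB pr L1 = deltaA pr mA aA \<eta> \<longrightarrow> tensB pr L2 = deltaA pr mA aA \<xi> \<longrightarrow>
        deltaA pr mA aA (commutator mB \<xi> \<eta>) =
          (\<lambda>x1 x2. tensB pr (LieB mB \<xi> L1) x1 x2 - tensB pr (LieB mB \<eta> L2) x1 x2)) \<and>
     (\<forall>x y L1 L2. tensA pr L1 = deltaB pr mB aB y \<longrightarrow> tensA pr L2 = deltaB pr mB aB x \<longrightarrow>
        deltaB pr mB aB (commutator mA x y) =
          (\<lambda>\<xi>1 \<xi>2. tensA pr (LieA mA x L1) \<xi>1 \<xi>2 - tensA pr (LieA mA y L2) \<xi>1 \<xi>2))"

definition RA :: "('a \<Rightarrow> 'b \<Rightarrow> 'f::ab_group_add) \<Rightarrow> ('b \<Rightarrow> 'b \<Rightarrow> 'b) \<Rightarrow> 'b \<Rightarrow> 'a \<Rightarrow> 'a" where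
  "RA pr mB \<eta> x = (THE w. \<forall>\<zeta>. pr w \<zeta> = - pr x (mB \<zeta> \<eta>))"

definition RB :: "('a \<Rightarrow> 'b \<Rightarrow> 'f::ab_group_add) \<Rightarrow> ('a \<Rightarrow> 'a \<Rightarrow> 'a) \<Rightarrow> 'a \<Rightarrow> 'b \<Rightarrow> 'b" where
  "RB pr mA y \<xi> = (THE \<omega>. \<forall>z. pr z \<omega> = - pr (mA z y) \<xi>)"

end

theory Submission imports Defs begin

definition dp2 :: "('f::{comm_ring_1,real_algebra_1} \<Rightarrow> 'a::ab_group_add \<Rightarrow> 'a) \<Rightarrow> ('f \<Rightarrow> 'b::ab_group_add \<Rightarrow> 'b)
   \<Rightarrow> ('a \<Rightarrow> 'b \<Rightarrow> 'f) \<Rightarrow> bool" where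
 "dp2 sm sm' pr \<longleftrightarrow> is_fmodule sm \<and> is_fmodule sm' \<and>
     (\<forall>x y \<xi>. pr (x + y) \<xi> = pr x \<xi> + pr y \<xi>) \<and>
     (\<forall>x \<xi> \<eta>. pr x (\<xi> + \<eta>) = pr x \<xi> + pr x \<eta>) \<and>
     (\<forall>f x \<xi>. pr (sm f x) \<xi> = f * pr x \<xi>) \<and>
     (\<forall>f x \<xi>. pr x (sm' f \<xi>) = f * pr x \<xi>) \<and>
     (\<forall>\<xi>. (\<forall>x. pr x \<xi> = 0) \<longrightarrow> \<xi> = 0) \<and>
     (\<forall>x. (\<forall>\<xi>. pr x \<xi> = 0) \<longrightarrow> x = 0) \<and>
     (\<exists>E::('a \<times> 'b) list. \<forall>x. x = (\<Sum>(e, \<epsilon>) \<leftarrow> E. sm (pr x \<epsilon>) e)) \<and>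
     (\<exists>E::('b \<times> 'a) list. \<forall>\<xi>. \<xi> = (\<Sum>(\<epsilon>, e) \<leftarrow> E. sm' (pr e \<xi>) \<epsilon>))"

lemma dp2_flip: "dp2 sm sm' pr \<Longrightarrow> dp2 sm' sm (\<lambda>\<xi> x. pr x \<xi>)"
  unfolding dp2_def apply (elim conjE) apply (intro conjI) apply (assumption | blast)+ done

lemma fm_zero: "is_fmodule sm \<Longrightarrow> sm 0 x = 0"
  unfolding is_fmodule_def by (metis add.right_neutral add_left_cancel)
lemma fm_zero2: "is_fmodule sm \<Longrightarrow> sm f 0 = 0"
  unfolding is_fmodule_def by (metis add.right_neutral add_left_cancel)

lemma pr_sum_left:
  assumes "\<forall>x y \<xi>. pr (x + y) \<xi> = pr x \<xi> + (pr y \<xi> :: 'f::comm_ring_1)"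
  shows "pr (sum_list xs) \<xi> = sum_list (map (\<lambda>x. pr x \<xi>) xs)"
proof -
  have z: "pr 0 \<xi> = 0" using assms by (metis add.right_neutral add_left_cancel)
  show ?thesis by (induction xs) (auto simp: z assms)
qed

lemma lin_sum:
  assumes "\<forall>x y. F (x + y) = F x + (F y :: 'f::comm_ring_1)"
  shows "F (sum_list xs) = sum_list (map F xs)"
proof -
  have z: "F 0 = 0" using assms by (metis add.right_neutral add_left_cancel)
  show ?thesis by (induction xs) (auto simp: z assms)
qed

lemma dual_pair_dp2:
  fixes sm :: "'f::{comm_ring_1,real_algebra_1} \<Rightarrow> 'a::ab_group_add \<Rightarrow> 'a"
    and sm' :: "'f \<Rightarrow> 'b::ab_group_add \<Rightarrow> 'b" and pr :: "'a \<Rightarrow> 'b \<Rightarrow> 'f"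
  assumes "dual_pair sm sm' pr" shows "dp2 sm sm' pr"
proof -
  from assms obtain E where E: "\<forall>x. x = (\<Sum>(e, \<epsilon>) \<leftarrow> E. sm (pr x \<epsilon>) e)"
    unfolding dual_pair_def by blast
  have fm: "is_fmodule sm" "is_fmodule sm'" using assms unfolding dual_pair_def by auto
  have padd: "\<forall>x y \<xi>. pr (x + y) \<xi> = pr x \<xi> + pr y \<xi>" using assms unfolding dual_pair_def by auto
  have padd2: "\<forall>x \<xi> \<eta>. pr x (\<xi> + \<eta>) = pr x \<xi> + pr x \<eta>" using assms unfolding dual_pair_def by auto
  have psm: "\<forall>f x \<xi>. pr (sm f x) \<xi> = f * pr x \<xi>" using assms unfolding dual_pair_def by auto
  have psm2: "\<forall>f x \<xi>. pr x (sm' f \<xi>) = f * pr x \<xi>" using assms unfolding dual_pair_def by auto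
  have nd: "\<forall>\<xi>. (\<forall>x. pr x \<xi> = 0) \<longrightarrow> \<xi> = 0" using assms unfolding dual_pair_def by auto
  have nd2: "\<forall>x. (\<forall>\<xi>. pr x \<xi> = 0) \<longrightarrow> x = 0"
  proof (intro allI impI)
    fix x assume h: "\<forall>\<xi>. pr x \<xi> = 0"
    have "x = (\<Sum>(e, \<epsilon>) \<leftarrow> E. sm (pr x \<epsilon>) e)" using E by blast
    also have "\<dots> = (\<Sum>(e, \<epsilon>) \<leftarrow> E. 0)" using h fm_zero[OF fm(1)]
      by (intro arg_cong[where f=sum_list] map_cong) auto
    also have "\<dots> = 0" by (induction E) auto
    finally show "x = 0" .
  qed
  have B: "\<forall>\<xi>. \<xi> = (\<Sum>(\<epsilon>, e) \<leftarrow> map (\<lambda>(e,\<epsilon>). (\<epsilon>, e)) E. sm' (pr e \<xi>) \<epsilon>)"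
  proof
    fix \<xi>
    let ?r = "(\<Sum>(\<epsilon>, e) \<leftarrow> map (\<lambda>(e,\<epsilon>). (\<epsilon>, e)) E. sm' (pr e \<xi>) \<epsilon>)"
    have "\<forall>x. pr x (?r - \<xi>) = 0"
    proof
      fix x
      have s1: "pr x ?r = (\<Sum>(e, \<epsilon>) \<leftarrow> E. pr e \<xi> * pr x \<epsilon>)"
        proof (induction E)
          case Nil show ?case using padd2 by simp (metis add.right_neutral add_left_cancel)
        next
          case (Cons p E) then show ?case using padd2 psm2 by (cases p) simp
        qed
      have "pr x \<xi> = pr (\<Sum>(e, \<epsilon>) \<leftarrow> E. sm (pr x \<epsilon>) e) \<xi>" using E by metis
      also have "\<dots> = (\<Sum>(e, \<epsilon>) \<leftarrow> E. pr x \<epsilon> * pr e \<xi>)"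
        proof (induction E)
          case Nil show ?case using padd by simp (metis add.right_neutral add_left_cancel)
        next
          case (Cons p E) then show ?case using padd psm by (cases p) simp
        qed
      finally have "pr x \<xi> = pr x ?r" using s1 by (simp add: mult.commute)
      moreover have "pr x (?r - \<xi>) + pr x \<xi> = pr x ?r" using padd2 by (metis diff_add_cancel)
      ultimately show "pr x (?r - \<xi>) = 0" by simp
    qed
    then show "\<xi> = ?r" using nd by (metis eq_iff_diff_eq_0)
  qed
  have B': "\<exists>E'::('b \<times> 'a) list. \<forall>\<xi>. \<xi> = (\<Sum>(\<epsilon>, e) \<leftarrow> E'. sm' (pr e \<xi>) \<epsilon>)"
    using B by (rule exI)
  have E': "\<exists>E::('a \<times> 'b) list. \<forall>x. x = (\<Sum>(e, \<epsilon>) \<leftarrow> E. sm (pr x \<epsilon>) e)"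
    using E by (rule exI)
  show ?thesis unfolding dp2_def by (intro conjI fm padd padd2 psm psm2 nd nd2 E' B')
qed


lemma fm_add: "is_fmodule sm \<Longrightarrow> sm f (x + y) = sm f x + sm f y" unfolding is_fmodule_def by blast
lemma fm_add2: "is_fmodule sm \<Longrightarrow> sm (f + g) x = sm f x + sm g x" unfolding is_fmodule_def by blast
lemma fm_diff: "is_fmodule sm \<Longrightarrow> sm f (x - y) = sm f x - sm f y"
proof -
  assume h: "is_fmodule sm"
  have "sm f (x - y) + sm f y = sm f x" using fm_add[OF h, of f "x - y" y] by simp
  then show ?thesis by (simp add: eq_diff_eq)
qed

lemma rep:
  fixes sm :: "'f::{comm_ring_1,real_algebra_1} \<Rightarrow> 'a::ab_group_add \<Rightarrow> 'a"
    and sm' :: "'f \<Rightarrow> 'b::ab_group_add \<Rightarrow> 'b" and pr :: "'a \<Rightarrow> 'b \<Rightarrow> 'f"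
  assumes dp: "dp2 sm sm' pr"
    and Fa: "\<And>\<xi> \<eta>. F (\<xi> + \<eta>) = F \<xi> + F \<eta>" and Fs: "\<And>g \<xi>. F (sm' g \<xi>) = g * F \<xi>"
  shows "\<exists>!y. \<forall>\<xi>. pr y \<xi> = F \<xi>"
proof -
  have padd: "\<And>x y \<xi>. pr (x + y) \<xi> = pr x \<xi> + pr y \<xi>" using dp unfolding dp2_def by blast
  have psm: "\<And>f x \<xi>. pr (sm f x) \<xi> = f * pr x \<xi>" using dp unfolding dp2_def by blast
  have nd2: "\<And>x. (\<forall>\<xi>. pr x \<xi> = 0) \<Longrightarrow> x = 0" using dp unfolding dp2_def by blast
  have pz: "\<And>\<xi>. pr 0 \<xi> = 0" using padd by (metis add.right_neutral add_left_cancel)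
  have F0: "F 0 = 0" using Fa by (metis add.right_neutral add_left_cancel)
  obtain E :: "('b \<times> 'a) list" where E: "\<And>\<xi>. \<xi> = (\<Sum>(\<epsilon>, e) \<leftarrow> E. sm' (pr e \<xi>) \<epsilon>)"
    using dp unfolding dp2_def by blast
  define y where "y = (\<Sum>(\<epsilon>, e) \<leftarrow> E. sm (F \<epsilon>) e)"
  have FE: "F (\<Sum>(\<epsilon>, e) \<leftarrow> E'. sm' (c \<epsilon> e) \<epsilon>) = (\<Sum>(\<epsilon>, e) \<leftarrow> E'. c \<epsilon> e * F \<epsilon>)" for E' c
    by (induction E') (auto simp: F0 Fa Fs)
  have "pr y \<xi> = F \<xi>" for \<xi>
  proof -
    have "pr y \<xi> = (\<Sum>(\<epsilon>, e) \<leftarrow> E. F \<epsilon> * pr e \<xi>)" unfolding y_def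
      by (induction E) (auto simp: pz padd psm)
    also have "\<dots> = F (\<Sum>(\<epsilon>, e) \<leftarrow> E. sm' (pr e \<xi>) \<epsilon>)" by (simp add: FE mult.commute)
    also have "\<dots> = F \<xi>" using E by metis
    finally show ?thesis .
  qed
  moreover have "y' = y" if "\<forall>\<xi>. pr y' \<xi> = F \<xi>" for y'
  proof -
    have "\<forall>\<xi>. pr (y' - y) \<xi> = 0"
      using that \<open>\<And>\<xi>. pr y \<xi> = F \<xi>\<close> padd by (metis add_diff_cancel diff_add_cancel diff_self)
    then have "y' - y = 0" by (rule nd2)
    then show ?thesis by simp
  qed
  ultimately show ?thesis by blast
qed

lemma bil_rep:
  fixes sm :: "'f::{comm_ring_1,real_algebra_1} \<Rightarrow> 'a::ab_group_add \<Rightarrow> 'a"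
    and sm' :: "'f \<Rightarrow> 'b::ab_group_add \<Rightarrow> 'b" and pr :: "'a \<Rightarrow> 'b \<Rightarrow> 'f"
    and B :: "'b \<Rightarrow> 'b \<Rightarrow> 'f"
  assumes dp: "dp2 sm sm' pr"
    and B1: "\<And>\<xi> \<eta> \<zeta>. B (\<xi> + \<eta>) \<zeta> = B \<xi> \<zeta> + B \<eta> \<zeta>" and B1s: "\<And>g \<xi> \<zeta>. B (sm' g \<xi>) \<zeta> = g * B \<xi> \<zeta>"
    and B2: "\<And>\<xi> \<eta> \<zeta>. B \<zeta> (\<xi> + \<eta>) = B \<zeta> \<xi> + B \<zeta> \<eta>" and B2s: "\<And>g \<xi> \<zeta>. B \<zeta> (sm' g \<xi>) = g * B \<zeta> \<xi>"
  shows "\<exists>L. tensA pr L = B"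
proof -
  have padd: "\<And>x y \<xi>. pr (x + y) \<xi> = pr x \<xi> + pr y \<xi>" using dp unfolding dp2_def by blast
  have psm: "\<And>f x \<xi>. pr (sm f x) \<xi> = f * pr x \<xi>" using dp unfolding dp2_def by blast
  obtain E :: "('b \<times> 'a) list" where E: "\<And>\<xi>. \<xi> = (\<Sum>(\<epsilon>, e) \<leftarrow> E. sm' (pr e \<xi>) \<epsilon>)"
    using dp unfolding dp2_def by blast
  have exp: "F \<xi> = (\<Sum>p \<leftarrow> E. pr (snd p) \<xi> * F (fst p))"
    if Fa: "\<And>\<xi> \<eta>. F (\<xi> + \<eta>) = F \<xi> + F \<eta>" and Fs: "\<And>g \<xi>. F (sm' g \<xi>) = g * F \<xi>" for F :: "'b \<Rightarrow> 'f" and \<xi>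
  proof -
    have F0: "F 0 = 0" using Fa by (metis add.right_neutral add_left_cancel)
    have FE: "F (\<Sum>(\<epsilon>, e) \<leftarrow> E'. sm' (c \<epsilon> e) \<epsilon>) = (\<Sum>p \<leftarrow> E'. c (fst p) (snd p) * F (fst p))" for E' c
      by (induction E') (auto simp: F0 Fa Fs)
    have "F \<xi> = F (\<Sum>(\<epsilon>, e) \<leftarrow> E. sm' (pr e \<xi>) \<epsilon>)" using E by metis
    also have "\<dots> = (\<Sum>p \<leftarrow> E. pr (snd p) \<xi> * F (fst p))" by (simp add: FE)
    finally show ?thesis .
  qed
  define L where "L = concat (map (\<lambda>p. map (\<lambda>q. (sm (B (fst p) (fst q)) (snd p), snd q)) E) E)"
  have "tensA pr L \<xi>1 \<xi>2 = B \<xi>1 \<xi>2" for \<xi>1 \<xi>2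
  proof -
    have inner: "tensA pr (map (\<lambda>q. (sm (B (fst p) (fst q)) (snd p), snd q)) Q) \<xi>1 \<xi>2
        = pr (snd p) \<xi>1 * (\<Sum>q \<leftarrow> Q. pr (snd q) \<xi>2 * B (fst p) (fst q))" for p Q
      unfolding tensA_def by (induction Q) (auto simp: psm algebra_simps)
    have "tensA pr (concat (map (\<lambda>p. map (\<lambda>q. (sm (B (fst p) (fst q)) (snd p), snd q)) E) P)) \<xi>1 \<xi>2
        = (\<Sum>p \<leftarrow> P. pr (snd p) \<xi>1 * (\<Sum>q \<leftarrow> E. pr (snd q) \<xi>2 * B (fst p) (fst q)))" for P
    proof (induction P)
      case Nil then show ?case by (simp add: tensA_def)
    next
      case (Cons p P) then show ?case using inner[of p E] by (simp add: tensA_def)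
    qed
    also have "(\<Sum>p \<leftarrow> E. pr (snd p) \<xi>1 * (\<Sum>q \<leftarrow> E. pr (snd q) \<xi>2 * B (fst p) (fst q)))
        = (\<Sum>p \<leftarrow> E. pr (snd p) \<xi>1 * B (fst p) \<xi>2)"
    proof -
      have e2: "\<And>a. B a \<xi>2 = (\<Sum>q \<leftarrow> E. pr (snd q) \<xi>2 * B a (fst q))"
        by (rule exp) (simp_all add: B2 B2s)
      show ?thesis by (simp only: e2[symmetric])
    qed
    also have "\<dots> = B \<xi>1 \<xi>2" by (rule exp[symmetric]) (simp_all add: B1 B1s)
    finally show ?thesis unfolding L_def .
  qed
  then show ?thesis by blast
qed


definition compA_cond where
  "compA_cond pr mA aA mB aB \<longleftrightarrow>
     (\<forall>x y L1 L2. tensA pr L1 = deltaB pr mB aB y \<longrightarrow> tensA pr L2 = deltaB pr mB aB x \<longrightarrow>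
        deltaB pr mB aB (commutator mA x y) =
          (\<lambda>\<xi>1 \<xi>2. tensA pr (LieA mA x L1) \<xi>1 \<xi>2 - tensA pr (LieA mA y L2) \<xi>1 \<xi>2))"

lemma tensA_Nil[simp]: "tensA pr [] a b = 0" by (simp add: tensA_def)
lemma tensA_Cons[simp]: "tensA pr (p # L) a b = pr (fst p) a * pr (snd p) b + tensA pr L a b"
  by (cases p) (simp add: tensA_def)
lemma tensA_app[simp]: "tensA pr (L @ M) a b = tensA pr L a b + tensA pr M a b"
  by (simp add: tensA_def)
lemma LieA_Nil[simp]: "LieA mA x [] = []" by (simp add: LieA_def)
lemma LieA_Cons[simp]: "LieA mA x (p # L) = [(mA x (fst p), snd p), (fst p, commutator mA x (snd p))] @ LieA mA x L"
  by (cases p) (simp add: LieA_def)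
lemma LieA_app[simp]: "LieA mA x (L @ M) = LieA mA x L @ LieA mA x M"
  by (simp add: LieA_def)

lemma abs_alg:
  fixes A S1 S2 L2 Tg1 Tg2 g P a h Y Q H M N TY :: "'f::comm_ring_1"
  assumes "A = S1 - S2" "L2 = Tg1 - Tg2" "L2 = g*A + P*a + h*Y + Q*H"
    "Tg1 = g*S1 + h*TY + M*Q + a*P" "Tg2 = g*S2 - Q*(H - N)" "TY = Y"
  shows "(M - N) * Q = 0"
proof -
  have "g*(S1 - S2) + P*a + h*Y + Q*H = g*S1 + h*Y + M*Q + a*P - (g*S2 - Q*(H - N))"
    using assms by simp
  then show ?thesis by (simp add: algebra_simps)
qed

lemma mainA:
  fixes sm :: "'f::{comm_ring_1,real_algebra_1} \<Rightarrow> 'a::ab_group_add \<Rightarrow> 'a"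
    and sm' :: "'f \<Rightarrow> 'b::ab_group_add \<Rightarrow> 'b" and pr :: "'a \<Rightarrow> 'b \<Rightarrow> 'f"
    and mA :: "'a \<Rightarrow> 'a \<Rightarrow> 'a" and aA :: "'a \<Rightarrow> 'f \<Rightarrow> 'f"
    and mB :: "'b \<Rightarrow> 'b \<Rightarrow> 'b" and aB :: "'b \<Rightarrow> 'f \<Rightarrow> 'f"
  assumes dp: "dp2 sm sm' pr" and LA: "left_symmetric_algebroid sm mA aA"
    and LB: "left_symmetric_algebroid sm' mB aB" and C: "compA_cond pr mA aA mB aB"
  shows "mA x (dstar pr aB f) = - RA pr mB (dA pr aA f) x"
proof -
  have fmA: "is_fmodule sm" and fmB: "is_fmodule sm'" using dp unfolding dp2_def by blast+
  have padd: "\<And>x y \<xi>. pr (x + y) \<xi> = pr x \<xi> + pr y \<xi>" using dp unfolding dp2_def by blast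
  have padd2: "\<And>x \<xi> \<eta>. pr x (\<xi> + \<eta>) = pr x \<xi> + pr x \<eta>" using dp unfolding dp2_def by blast
  have psm: "\<And>f x \<xi>. pr (sm f x) \<xi> = f * pr x \<xi>" using dp unfolding dp2_def by blast
  have psm2: "\<And>f x \<xi>. pr x (sm' f \<xi>) = f * pr x \<xi>" using dp unfolding dp2_def by blast
  have nd2: "\<And>x. (\<forall>\<xi>. pr x \<xi> = 0) \<Longrightarrow> x = 0" using dp unfolding dp2_def by blast
  have pdiff: "\<And>x y \<xi>. pr (x - y) \<xi> = pr x \<xi> - pr y \<xi>" using padd by (metis diff_add_cancel eq_diff_eq)
  have pdiff2: "\<And>x \<xi> \<eta>. pr x (\<xi> - \<eta>) = pr x \<xi> - pr x \<eta>" using padd2 by (metis diff_add_cancel eq_diff_eq)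
  have pneg2: "\<And>x \<xi>. pr x (- \<xi>) = - pr x \<xi>" using pdiff2[of _ 0] padd2 by (metis add.right_neutral add_left_cancel diff_0 diff_0_right)
  obtain EA :: "('a \<times> 'b) list" where EA: "\<And>x. x = (\<Sum>(e, \<epsilon>) \<leftarrow> EA. sm (pr x \<epsilon>) e)"
    using dp unfolding dp2_def by blast
  have vvA: "\<And>x. is_vector_field (aA x)" using LA unfolding left_symmetric_algebroid_def by simp
  have vfA: "\<And>x f g. aA x (f + g) = aA x f + aA x g" "\<And>x f g. aA x (f * g) = f * aA x g + g * aA x f"
    using vvA unfolding is_vector_field_def by simp_all
  have vvB: "\<And>x. is_vector_field (aB x)" using LB unfolding left_symmetric_algebroid_def by simp
  have vfB: "\<And>x f g. aB x (f + g) = aB x f + aB x g" "\<And>x f g. aB x (f * g) = f * aB x g + g * aB x f"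
    using vvB unfolding is_vector_field_def by simp_all
  have aBdiff: "\<And>x f g. aB x (f - g) = aB x f - aB x g" using vfB(1) by (metis diff_add_cancel eq_diff_eq)
  have aAadd: "\<And>x y g. aA (x + y) g = aA x g + aA y g" and aAsm: "\<And>f x g. aA (sm f x) g = f * aA x g"
    using LA unfolding left_symmetric_algebroid_def by simp_all
  have aBadd: "\<And>x y g. aB (x + y) g = aB x g + aB y g" and aBsm: "\<And>f x g. aB (sm' f x) g = f * aB x g"
    using LB unfolding left_symmetric_algebroid_def by simp_all
  have mA1: "\<And>f x y. mA x (sm f y) = sm f (mA x y) + sm (aA x f) y"
    and mA2: "\<And>f x y. mA (sm f x) y = sm f (mA x y)"
    using LA unfolding left_symmetric_algebroid_def by simp_all
  have mBadd1: "\<And>x y z. mB (x + y) z = mB x z + mB y z" and mBadd2: "\<And>x y z. mB x (y + z) = mB x y + mB x z"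
    and mB1: "\<And>f x y. mB x (sm' f y) = sm' f (mB x y) + sm' (aB x f) y"
    and mB2: "\<And>f x y. mB (sm' f x) y = sm' f (mB x y)"
    using LB unfolding left_symmetric_algebroid_def by simp_all
  have Dex: "\<exists>!y. \<forall>\<xi>. pr y \<xi> = aB \<xi> g" for g
    by (rule rep[OF dp]) (simp_all add: aBadd aBsm)
  have D: "\<And>\<xi>. pr (dstar pr aB g) \<xi> = aB \<xi> g" for g
    unfolding dstar_def using theI'[OF Dex[of g]] by blast
  have dAex: "\<exists>!\<xi>. \<forall>x. pr x \<xi> = aA x g" for g
    using rep[OF dp2_flip[OF dp], of "\<lambda>x. aA x g"] by (simp add: aAadd aAsm)
  have dAp: "\<And>x. pr x (dA pr aA g) = aA x g" for g
    unfolding dA_def using theI'[OF dAex[of g]] by blast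
  have Rex: "\<exists>!w. \<forall>\<zeta>. pr w \<zeta> = - pr x (mB \<zeta> \<eta>)" for x \<eta>
    by (rule rep[OF dp]) (simp_all add: mBadd1 mB2 padd2 psm2)
  have R: "\<And>\<zeta>. pr (RA pr mB \<eta> x) \<zeta> = - pr x (mB \<zeta> \<eta>)" for x \<eta>
    unfolding RA_def using theI'[OF Rex[of x \<eta>]] by blast
  have T: "\<exists>L. tensA pr L = deltaB pr mB aB y" for y
    by (rule bil_rep[OF dp])
      (simp_all add: deltaB_def aBadd aBsm mBadd1 mBadd2 mB1 mB2 padd2 psm2 vfB algebra_simps)
  have tmap: "tensA pr (map (\<lambda>p. (sm g (fst p), snd p)) L) a b = g * tensA pr L a b" for g L a b
    by (induction L) (simp_all add: psm algebra_simps)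
  have Lie_a: "tensA pr (LieA mA x (map (\<lambda>p. (sm g (fst p), snd p)) L)) \<xi>1 \<xi>2
      = g * tensA pr (LieA mA x L) \<xi>1 \<xi>2 + aA x g * tensA pr L \<xi>1 \<xi>2" for x g L \<xi>1 \<xi>2
    by (induction L) (simp_all add: mA1 padd psm algebra_simps)
  have Lie_b: "tensA pr (LieA mA (sm g y) L) \<xi>1 \<xi>2
      = g * tensA pr (LieA mA y L) \<xi>1 \<xi>2 - pr y \<xi>2 * tensA pr L \<xi>1 (dA pr aA g)" for y g L \<xi>1 \<xi>2
    by (induction L) (simp_all add: commutator_def mA1 mA2 padd pdiff psm dAp algebra_simps)
  have comm_sm: "commutator mA x (sm g y) = sm g (commutator mA x y) + sm (aA x g) y" for x g y
    unfolding commutator_def by (simp add: mA1 mA2 fm_diff[OF fmA] algebra_simps)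
  have dB_add: "deltaB pr mB aB (u + v) \<xi>1 \<xi>2 = deltaB pr mB aB u \<xi>1 \<xi>2 + deltaB pr mB aB v \<xi>1 \<xi>2" for u v \<xi>1 \<xi>2
    by (simp add: deltaB_def padd vfB algebra_simps)
  have dB_sm: "deltaB pr mB aB (sm g u) \<xi>1 \<xi>2 = g * deltaB pr mB aB u \<xi>1 \<xi>2 + pr u \<xi>2 * aB \<xi>1 g" for g u \<xi>1 \<xi>2
    by (simp add: deltaB_def psm vfB algebra_simps)
  have key: "(pr (mA x (dstar pr aB g)) \<xi>1 - pr x (mB \<xi>1 (dA pr aA g))) * pr y \<xi>2 = 0" for x g y \<xi>1 \<xi>2
  proof -
    obtain Ty where Ty: "tensA pr Ty = deltaB pr mB aB y" using T by blast
    obtain Tx where Tx: "tensA pr Tx = deltaB pr mB aB x" using T by blast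
    define Tgy where "Tgy = map (\<lambda>p. (sm g (fst p), snd p)) Ty @ [(dstar pr aB g, y)]"
    have Tgy: "tensA pr Tgy = deltaB pr mB aB (sm g y)"
    proof (intro ext)
      fix a b show "tensA pr Tgy a b = deltaB pr mB aB (sm g y) a b"
        unfolding Tgy_def using Ty by (simp add: tmap D dB_sm algebra_simps)
    qed
    have e1: "deltaB pr mB aB (commutator mA x y) \<xi>1 \<xi>2
        = tensA pr (LieA mA x Ty) \<xi>1 \<xi>2 - tensA pr (LieA mA y Tx) \<xi>1 \<xi>2"
      using C[unfolded compA_cond_def, rule_format, OF Ty Tx] by metis
    have e2: "deltaB pr mB aB (commutator mA x (sm g y)) \<xi>1 \<xi>2
        = tensA pr (LieA mA x Tgy) \<xi>1 \<xi>2 - tensA pr (LieA mA (sm g y) Tx) \<xi>1 \<xi>2"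
      using C[unfolded compA_cond_def, rule_format, OF Tgy Tx] by metis
    have l2: "deltaB pr mB aB (commutator mA x (sm g y)) \<xi>1 \<xi>2
      = g * deltaB pr mB aB (commutator mA x y) \<xi>1 \<xi>2 + pr (commutator mA x y) \<xi>2 * aB \<xi>1 g
        + aA x g * deltaB pr mB aB y \<xi>1 \<xi>2 + pr y \<xi>2 * aB \<xi>1 (aA x g)"
      by (simp add: comm_sm dB_add dB_sm)
    have r2: "tensA pr (LieA mA x Tgy) \<xi>1 \<xi>2 = g * tensA pr (LieA mA x Ty) \<xi>1 \<xi>2 + aA x g * tensA pr Ty \<xi>1 \<xi>2
        + pr (mA x (dstar pr aB g)) \<xi>1 * pr y \<xi>2 + aB \<xi>1 g * pr (commutator mA x y) \<xi>2"
      unfolding Tgy_def by (simp add: Lie_a D)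
    have r3: "tensA pr (LieA mA (sm g y) Tx) \<xi>1 \<xi>2 = g * tensA pr (LieA mA y Tx) \<xi>1 \<xi>2
        - pr y \<xi>2 * (aB \<xi>1 (aA x g) - pr x (mB \<xi>1 (dA pr aA g)))"
      using Tx by (simp add: Lie_b deltaB_def dAp)
    have ty: "tensA pr Ty \<xi>1 \<xi>2 = deltaB pr mB aB y \<xi>1 \<xi>2" using Ty by simp
    show ?thesis by (rule abs_alg[OF e1 e2 l2 r2 r3 ty])
  qed
  define w where "w = mA x (dstar pr aB f) + RA pr mB (dA pr aA f) x"
  have cw: "pr w \<zeta> = pr (mA x (dstar pr aB f)) \<zeta> - pr x (mB \<zeta> (dA pr aA f))" for \<zeta>
    unfolding w_def by (simp add: padd R)
  have "pr w \<zeta> = 0" for \<zeta>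
  proof -
    have "pr w \<zeta> = pr (\<Sum>(e, \<epsilon>) \<leftarrow> EA. sm (pr w \<epsilon>) e) \<zeta>" using EA by metis
    also have "\<dots> = (\<Sum>(e, \<epsilon>) \<leftarrow> EA. pr w \<epsilon> * pr e \<zeta>)"
      by (induction EA) (auto simp: padd psm pdiff[of 0 0, simplified])
    also have "\<dots> = (\<Sum>(e, \<epsilon>) \<leftarrow> EA. 0)"
      by (intro arg_cong[where f=sum_list] map_cong refl) (auto simp: cw key)
    also have "\<dots> = 0" by (induction EA) auto
    finally show ?thesis .
  qed
  then have "w = 0" by (intro nd2 allI)
  then show ?thesis unfolding w_def by (simp only: eq_neg_iff_add_eq_0)
qed


lemma flip_tens: "tensA (\<lambda>\<xi> x. pr x \<xi>) L = tensB pr L"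
  unfolding tensA_def tensB_def by (rule refl)
lemma flip_delta: "deltaB (\<lambda>\<xi> x. pr x \<xi>) mA aA = deltaA pr mA aA"
  unfolding deltaA_def deltaB_def by (rule refl)
lemma flip_Lie: "LieA = LieB"
  unfolding LieA_def LieB_def by (rule refl)
lemma flip_dstar: "dstar (\<lambda>\<xi> x. pr x \<xi>) aA f = dA pr aA f"
  unfolding dstar_def dA_def by (rule refl)
lemma flip_dA: "dA (\<lambda>\<xi> x. pr x \<xi>) aB f = dstar pr aB f"
  unfolding dstar_def dA_def by (rule refl)
lemma flip_RA: "RA (\<lambda>\<xi> x. pr x \<xi>) mA y \<xi> = RB pr mA y \<xi>"
  unfolding RA_def RB_def by (rule refl)

theorem mainTheorem3:
  fixes sm :: "'f::{comm_ring_1,real_algebra_1} \<Rightarrow> 'a::ab_group_add \<Rightarrow> 'a"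
    and sm' :: "'f \<Rightarrow> 'b::ab_group_add \<Rightarrow> 'b"
    and pr :: "'a \<Rightarrow> 'b \<Rightarrow> 'f"
    and mA :: "'a \<Rightarrow> 'a \<Rightarrow> 'a" and aA :: "'a \<Rightarrow> 'f \<Rightarrow> 'f"
    and mB :: "'b \<Rightarrow> 'b \<Rightarrow> 'b" and aB :: "'b \<Rightarrow> 'f \<Rightarrow> 'f"
    and x :: 'a and \<xi> :: 'b and f :: 'f
  assumes "left_symmetric_bialgebroid sm sm' pr mA aA mB aB"
  shows "mA x (dstar pr aB f) = - RA pr mB (dA pr aA f) x \<and>
         mB \<xi> (dA pr aA f) = - RB pr mA (dstar pr aB f) \<xi>"
proof -
  note H = assms[unfolded left_symmetric_bialgebroid_def]
  have dp: "dp2 sm sm' pr" by (rule dual_pair_dp2[OF conjunct1[OF H]])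
  have LA: "left_symmetric_algebroid sm mA aA" by (rule conjunct1[OF conjunct2[OF H]])
  have LB: "left_symmetric_algebroid sm' mB aB" by (rule conjunct1[OF conjunct2[OF conjunct2[OF H]]])
  note c1 = conjunct1[OF conjunct2[OF conjunct2[OF conjunct2[OF H]]]]
  note c2 = conjunct2[OF conjunct2[OF conjunct2[OF conjunct2[OF H]]]]
  have C2: "compA_cond pr mA aA mB aB" unfolding compA_cond_def by (rule c2)
  have C1: "compA_cond (\<lambda>\<xi> x. pr x \<xi>) mB aB mA aA"
    unfolding compA_cond_def flip_tens[of pr] flip_delta[of pr mA aA] flip_Lie by (rule c1)
  have 1: "mA x (dstar pr aB f) = - RA pr mB (dA pr aA f) x" by (rule mainA[OF dp LA LB C2])
  have 2: "mB \<xi> (dstar (\<lambda>\<xi> x. pr x \<xi>) aA f) = - RA (\<lambda>\<xi> x. pr x \<xi>) mA (dA (\<lambda>\<xi> x. pr x \<xi>) aB f) \<xi>"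
    using mainA[where sm=sm' and sm'=sm and pr="\<lambda>\<xi> x. pr x \<xi>" and mA=mB and aA=aB and mB=mA and aB=aA,
      OF dp2_flip[OF dp] LB LA C1] .
  note two = 2[unfolded flip_dstar[of pr aA f] flip_dA[of pr aB f] flip_RA[of pr mA]]
  show ?thesis by (intro conjI 1 two)
qed

end
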